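(* Let $\tau=\tfrac12(1+\sqrt5)$ and $\sigma=\tfrac12(1-\sqrt5)$, and consider the five pairs $(X^{\mathrm{aff}},H_m)\in\{(E_8^=,H_4),(D_6^=,H_3),(D_6^<,H_3),(D_6^>,H_3),(A_4^=,H_2)\}$, with the crystallographic space $V_n$ (where $n=8,6,6,6,4$ respectively), affine root $\alpha_0\in V_n$, projections $\pi_\parallel,\pi_\perp$ and vectors $a_i,\bar a_i$ as described in the context. Put $a_0:=\pi_\parallel(\alpha_0)$ and let $\hat A$ be the $(m+1)\times(m+1)$ matrix $\hat A_{ij}=2\frac{(a_i\mid a_j)}{(a_i\mid a_i)}$, $0\le i,j\le m$ (the induced Cartan matrix). Then in each of the five cases: $a_0\neq 0$; $\hat A_{ii}=2$; every off-diagonal entry of $\hat A$ is a non-positive element of $\mathbb{Q}[\tau]=\{p+q\tau: p,q\in\mathbb{Q}\}$ (and lies in $\mathbb{Z}[\tau]=\{p+q\tau:p,q\in\mathbb{Z}\}$ in the three cases $E_8^=,D_6^=,A_4^=$); $\hat A_{ij}=0$ if and only if $\hat A_{ji}=0$; and $\det\hat A=0$. Thus $\hat A$ is an affine extension of the Cartan matrix of $H_m$ (its lower right $m\times m$ block). Moreover, if $\bar a_0:=\pi_\perp(\alpha_0)$ and $\bar{\hat A}_{ij}=2\frac{(\bar a_i\mid \bar a_j)}{(\bar a_i\mid \bar a_i)}$, then the coefficients of $\bar a_0$ in the basis $\bar a_1,\dots,\bar a_m$ are the Galois conjugates of the coefficients of $a_0$ in the basis $a_1,\dots,a_m$, and $\bar{\hat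 A}$ is the entrywise Galois conjugate of $\hat A$.
   Context: Galois conjugation on $\mathbb{Q}[\tau]$ is the field automorphism $x\mapsto\bar x$ exchanging $\tau$ and $\sigma$ (note $\tau^2=\tau+1$, $\sigma^2=\sigma+1$). Non-crystallographic side ($m\in\{2,3,4\}$): $a_1,\dots,a_m$ are vectors in Euclidean space $\mathbb{R}^m$ with inner product $(\cdot\mid\cdot)$, all with $(a_i\mid a_i)=1$ and with the following other inner products (all unlisted ones are $0$). $H_4$: $(a_1\mid a_2)=(a_2\mid a_3)=-\tfrac12$, $(a_3\mid a_4)=-\tfrac{\tau}{2}$. $H_3$: $(a_1\mid a_2)=-\tfrac12$, $(a_2\mid a_3)=-\tfrac{\tau}{2}$. $H_2$: $(a_1\mid a_2)=-\tfrac{\tau}{2}$. (These are simple roots of the standard representations of $H_4,H_3,H_2$; e.g. for $H_4$ one may take $a_1=\frac12(-\sigma,-\tau,0,-1)$, $a_2=\frac12(0,-\sigma,-\tau,1)$, $a_3=\frac12(0,1,-\sigma,-\tau)$, $a_4=\frac12(0,-1,-\sigma,\tau)$.) The vectors $\bar a_1,\dots,\bar a_m$ are defined in the same way but with every $\tau$ in these inner products replaced by $\sigma$ (simple roots of the non-standard representation). Crystallographic side: $V_n$ is a real vector space with basis $\alpha_1,\dots,\alpha_n$ (simple roots). The Dynkin diagrams are labelled as follows: $A_4$: chain $\alpha_1-\alpha_2-\alpha_3-\alpha_4$; $D_6$: chain $\alpha_1-\alpha_2-\alpha_3-\alpha_4-\alpha_5$ with $\alpha_6$ joined to $\alpha_4$;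 $E_8$: chain $\alpha_1-\cdots-\alpha_7$ with $\alpha_8$ joined to $\alpha_5$. The affine roots are the elements of $V_n$ given by: $E_8^=$: $-\alpha_0=2\alpha_1+3\alpha_2+4\alpha_3+5\alpha_4+6\alpha_5+4\alpha_6+2\alpha_7+3\alpha_8$; $D_6^=$: $-\alpha_0=\alpha_1+2\alpha_2+2\alpha_3+2\alpha_4+\alpha_5+\alpha_6$; $D_6^<$: $-\alpha_0=\alpha_1+\alpha_2+\alpha_3+\alpha_4+\tfrac12\alpha_5+\tfrac12\alpha_6$; $D_6^>$: $-\alpha_0=2\alpha_1+2\alpha_2+2\alpha_3+2\alpha_4+\alpha_5+\alpha_6$; $A_4^=$: $-\alpha_0=\alpha_1+\alpha_2+\alpha_3+\alpha_4$. Projections: $\pi_\parallel:V_n\to\mathbb{R}^m$ is the linear map given on the basis by: for $E_8\to H_4$: $\alpha_1\mapsto a_1$, $\alpha_2\mapsto a_2$, $\alpha_3\mapsto a_3$, $\alpha_4\mapsto\tau a_4$, $\alpha_5\mapsto\tau a_3$, $\alpha_6\mapsto\tau a_2$, $\alpha_7\mapsto\tau a_1$, $\alpha_8\mapsto a_4$; for $D_6\to H_3$: $\alpha_1\mapsto a_1$, $\alpha_2\mapsto a_2$, $\alpha_3\mapsto\tau a_3$, $\alpha_4\mapsto\tau a_2$, $\alpha_5\mapsto\tau a_1$, $\alpha_6\mapsto a_3$; for $A_4\to H_2$: $\alpha_1\mapsto a_1$, $\alpha_2\mapsto\tau a_2$, $\alpha_3\mapsto\tau a_1$, $\alpha_4\mapsto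 a_2$. The projection $\pi_\perp$ is defined by the same formulas with $\tau$ replaced by $\sigma$ and each $a_i$ replaced by $\bar a_i$. *)

theory Defs
  imports "HOL-Analysis.Analysis"
begin

definition tau :: real where "tau = (1 + sqrt 5) / 2"
definition sigma :: real where "sigma = (1 - sqrt 5) / 2"

definition Qtau :: "real set" where
  "Qtau = {x. \<exists>p q :: rat. x = of_rat p + of_rat q * tau}"
definition Ztau :: "real set" where
  "Ztau = {x. \<exists>p q :: int. x = of_int p + of_int q * tau}"

definition galois :: "real \<Rightarrow> real" where
  "galois x = (THE y. \<exists>p q :: rat. x = of_rat p + of_rat q * tau \<and> y = of_rat p + of_rat q * sigma)"

datatype affcase = E8_eq | D6_eq | D6_lt | D6_gt | A4_eq

fun hrank :: "affcase \<Rightarrow> nat" where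
  "hrank E8_eq = 4" | "hrank D6_eq = 3" | "hrank D6_lt = 3" | "hrank D6_gt = 3" | "hrank A4_eq = 2"

fun crank :: "affcase \<Rightarrow> nat" where
  "crank E8_eq = 8" | "crank D6_eq = 6" | "crank D6_lt = 6" | "crank D6_gt = 6" | "crank A4_eq = 4"

text \<open>Gram matrix (a_i | a_j), 1 <= i,j <= m, of the simple roots of H_m, with g = tau
  (standard representation) or g = sigma (non-standard representation).\<close>
definition Hgram :: "nat \<Rightarrow> real \<Rightarrow> nat \<Rightarrow> nat \<Rightarrow> real" where
  "Hgram m g i j =
    (if i = j then 1
     else if m = 4 then
       (if {i,j} = {1,2} \<or> {i,j} = {2,3} then -1/2 else if {i,j} = {3,4} then - g/2 else 0)
     else if m = 3 then
       (if {i,j} = {1,2} then -1/2 else if {i,j} = {2,3} then - g/2 else 0)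
     else if m = 2 then
       (if {i,j} = {1,2} then - g/2 else 0)
     else 0)"

text \<open>Coefficients of -alpha_0 in the basis alpha_1..alpha_n (list entry k is the coefficient of alpha_(k+1)).\<close>
fun negalpha0 :: "affcase \<Rightarrow> real list" where
  "negalpha0 E8_eq = [2,3,4,5,6,4,2,3]"
| "negalpha0 D6_eq = [1,2,2,2,1,1]"
| "negalpha0 D6_lt = [1,1,1,1,1/2,1/2]"
| "negalpha0 D6_gt = [2,2,2,2,1,1]"
| "negalpha0 A4_eq = [1,1,1,1]"

text \<open>Elements of V_n are represented by their coordinate functions (coordinates at 1..n)
  with respect to the simple roots alpha_1..alpha_n.\<close>
definition alpha0 :: "affcase \<Rightarrow> nat \<Rightarrow> real" where
  "alpha0 c j = - (negalpha0 c ! (j - 1))"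

text \<open>Projection table: entry k says alpha_(k+1) maps to (if b then g else 1) * a_i, where (b,i) is the entry.\<close>
fun projtab :: "affcase \<Rightarrow> (bool \<times> nat) list" where
  "projtab E8_eq = [(False,1),(False,2),(False,3),(True,4),(True,3),(True,2),(True,1),(False,4)]"
| "projtab D6_eq = [(False,1),(False,2),(True,3),(True,2),(True,1),(False,3)]"
| "projtab D6_lt = [(False,1),(False,2),(True,3),(True,2),(True,1),(False,3)]"
| "projtab D6_gt = [(False,1),(False,2),(True,3),(True,2),(True,1),(False,3)]"
| "projtab A4_eq = [(False,1),(True,2),(True,1),(False,2)]"

text \<open>The linear projection V_n to R^m determined on the basis by the table; with g = tau and
  the vectors a this is pi_par, with g = sigma and the vectors abar this is pi_perp.\<close>
definition proj :: "affcase \<Rightarrow> real \<Rightarrow> (nat \<Rightarrow> 'v::real_vector) \<Rightarrow> (nat \<Rightarrow> real) \<Rightarrow> 'v" where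
  "proj c g a v = (\<Sum>j = 1..crank c.
      v j *\<^sub>R ((if fst (projtab c ! (j - 1)) then g else 1) *\<^sub>R a (snd (projtab c ! (j - 1)))))"

definition ext_roots :: "affcase \<Rightarrow> real \<Rightarrow> (nat \<Rightarrow> 'v::real_vector) \<Rightarrow> nat \<Rightarrow> 'v" where
  "ext_roots c g a i = (if i = 0 then proj c g a (alpha0 c) else a i)"

definition cartan_hat :: "(nat \<Rightarrow> 'v::real_inner) \<Rightarrow> nat \<Rightarrow> nat \<Rightarrow> real" where
  "cartan_hat b i j = 2 * inner (b i) (b j) / inner (b i) (b i)"

definition det_upto :: "nat \<Rightarrow> (nat \<Rightarrow> nat \<Rightarrow> real) \<Rightarrow> real" where
  "det_upto m M = (\<Sum>p \<in> {p. p permutes {0..m}}. of_int (sign p) * (\<Prod>i\<in>{0..m}. M i (p i)))"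

end

theory Submission imports Defs "Jordan_Normal_Form.Determinant" begin

definition ev :: "real \<Rightarrow> rat \<times> rat \<Rightarrow> real" where
  "ev g pq = of_rat (fst pq) + of_rat (snd pq) * g"

lemma le4: "(i::nat) \<le> 4 \<Longrightarrow> i = 0 \<or> i = 1 \<or> i = 2 \<or> i = 3 \<or> i = 4" by auto
lemma le3: "(i::nat) \<le> 3 \<Longrightarrow> i = 0 \<or> i = 1 \<or> i = 2 \<or> i = 3" by auto
lemma le2: "(i::nat) \<le> 2 \<Longrightarrow> i = 0 \<or> i = 1 \<or> i = 2" by auto
fun Xt :: "affcase \<Rightarrow> (rat \<times> rat) list" where
"Xt E8_eq = [(-2,-2), (-3,-4), (-4,-6), (-3,-5)]"
| "Xt D6_eq = [(-1,-1), (-2,-2), (-1,-2)]"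
| "Xt D6_lt = [(-1,-1/2), (-1,-1), (-1/2,-1)]"
| "Xt D6_gt = [(-2,-1), (-2,-2), (-1,-2)]"
| "Xt A4_eq = [(-1,-1), (-1,-1)]"

fun Ct :: "affcase \<Rightarrow> (rat \<times> rat) list list" where
"Ct E8_eq = [[(2,0),(-2,1),(0,0),(0,0),(0,0)],
     [(-1,0),(2,0),(-1,0),(0,0),(0,0)],
     [(0,0),(-1,0),(2,0),(-1,0),(0,0)],
     [(0,0),(0,0),(-1,0),(2,0),(0,-1)],
     [(0,0),(0,0),(0,0),(0,-1),(2,0)]]"
| "Ct D6_eq = [[(2,0),(0,0),(-2,1),(0,0)],
     [(0,0),(2,0),(-1,0),(0,0)],
     [(-1,0),(-1,0),(2,0),(0,-1)],
     [(0,0),(0,0),(0,-1),(2,0)]]"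
| "Ct D6_lt = [[(2,0),(-12/5,4/5),(0,0),(0,0)],
     [(-1,0),(2,0),(-1,0),(0,0)],
     [(0,0),(-1,0),(2,0),(0,-1)],
     [(0,0),(0,0),(0,-1),(2,0)]]"
| "Ct D6_gt = [[(2,0),(-6/5,2/5),(0,0),(0,0)],
     [(-2,0),(2,0),(-1,0),(0,0)],
     [(0,0),(-1,0),(2,0),(0,-1)],
     [(0,0),(0,0),(0,-1),(2,0)]]"
| "Ct A4_eq = [[(2,0),(-2,1),(-2,1)],
     [(-1,0),(2,0),(0,-1)],
     [(-1,0),(0,-1),(2,0)]]"

lemma E8_proj: "proj E8_eq g a (alpha0 E8_eq) = ((-2) + (-2) * g) *\<^sub>R a 1 + ((-3) + (-4) * g) *\<^sub>R a 2 + ((-4) + (-6) * g) *\<^sub>R a 3 + ((-3) + (-5) * g) *\<^sub>R a 4"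
proof -
  have s: "{1..8::nat} = {1,2,3,4,5,6,7,8}" by auto
  show ?thesis unfolding proj_def alpha0_def crank.simps s by (simp add: algebra_simps)
qed

lemma D6eq_proj: "proj D6_eq g a (alpha0 D6_eq) = ((-1) + (-1) * g) *\<^sub>R a 1 + ((-2) + (-2) * g) *\<^sub>R a 2 + ((-1) + (-2) * g) *\<^sub>R a 3"
proof -
  have s: "{1..6::nat} = {1,2,3,4,5,6}" by auto
  show ?thesis unfolding proj_def alpha0_def crank.simps s by (simp add: algebra_simps)
qed

lemma D6lt_proj: "proj D6_lt g a (alpha0 D6_lt) = ((-1) + (-1/2) * g) *\<^sub>R a 1 + ((-1) + (-1) * g) *\<^sub>R a 2 + ((-1/2) + (-1) * g) *\<^sub>R a 3"
proof -
  have s: "{1..6::nat} = {1,2,3,4,5,6}" by auto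
  show ?thesis unfolding proj_def alpha0_def crank.simps s by (simp add: algebra_simps)
qed

lemma D6gt_proj: "proj D6_gt g a (alpha0 D6_gt) = ((-2) + (-1) * g) *\<^sub>R a 1 + ((-2) + (-2) * g) *\<^sub>R a 2 + ((-1) + (-2) * g) *\<^sub>R a 3"
proof -
  have s: "{1..6::nat} = {1,2,3,4,5,6}" by auto
  show ?thesis unfolding proj_def alpha0_def crank.simps s by (simp add: algebra_simps)
qed

lemma A4_proj: "proj A4_eq g a (alpha0 A4_eq) = ((-1) + (-1) * g) *\<^sub>R a 1 + ((-1) + (-1) * g) *\<^sub>R a 2"
proof -
  have s: "{1..4::nat} = {1,2,3,4}" by auto
  show ?thesis unfolding proj_def alpha0_def crank.simps s by (simp add: algebra_simps)
qed

lemma E8_cartan: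
  fixes a :: "nat \<Rightarrow> 'v::real_inner"
  assumes g2: "g^2 = g + 1" and G: "\<forall>i\<in>{1..4}. \<forall>j\<in>{1..4}. inner (a i) (a j) = Hgram 4 g i j"
    and ij: "i \<le> 4" "j \<le> 4"
  shows "cartan_hat (ext_roots E8_eq g a) i j = ev g (Ct E8_eq ! i ! j)"
proof -
  have Gs[simp]: "\<And>i j. i\<in>{1..4} \<Longrightarrow> j\<in>{1..4} \<Longrightarrow> inner (a i) (a j) = Hgram 4 g i j" using G by blast
  have gg: "g*g = g+1" using g2 by (simp add: power2_eq_square)
  have gk: "\<And>k. g*(g*k) = k + g*k" by (simp only: mult.assoc[symmetric] gg) (simp add: algebra_simps)
  let ?b = "ext_roots E8_eq g a"
  have b0: "?b 0 = ((-2) + (-2) * g) *\<^sub>R a 1 + ((-3) + (-4) * g) *\<^sub>R a 2 + ((-4) + (-6) * g) *\<^sub>R a 3 + ((-3) + (-5) * g) *\<^sub>R a 4"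
    using E8_proj by (simp add: ext_roots_def)
  have bi[simp]: "\<And>i. i \<noteq> 0 \<Longrightarrow> ?b i = a i" by (simp add: ext_roots_def)
  have n00: "inner (?b 0) (?b 0) = 1 + g"
    unfolding b0 by (simp add: inner_add_left inner_add_right Hgram_def doubleton_eq_iff; ((simp add: field_simps)?); (simp add: gg gk algebra_simps)?)
  have nz: "1 + g \<noteq> 0"
  proof
    assume "1 + g = 0" hence "g = - (1 + g - g)" by simp
    with g2 show False by simp
  qed
  have n0_1: "inner (?b 0) (a 1) = -1/2"
    unfolding b0 by (simp add: inner_add_left inner_add_right Hgram_def doubleton_eq_iff; ((simp add: field_simps)?); (simp add: gg gk algebra_simps)?)
  have n0_2: "inner (?b 0) (a 2) = 0"
    unfolding b0 by (simp add: inner_add_left inner_add_right Hgram_def doubleton_eq_iff; ((simp add: field_simps)?); (simp add: gg gk algebra_simps)?)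
  have n0_3: "inner (?b 0) (a 3) = 0"
    unfolding b0 by (simp add: inner_add_left inner_add_right Hgram_def doubleton_eq_iff; ((simp add: field_simps)?); (simp add: gg gk algebra_simps)?)
  have n0_4: "inner (?b 0) (a 4) = 0"
    unfolding b0 by (simp add: inner_add_left inner_add_right Hgram_def doubleton_eq_iff; ((simp add: field_simps)?); (simp add: gg gk algebra_simps)?)
  note n0 = n0_1 n0_2 n0_3 n0_4
  have n0': "inner (a 1) (?b 0) = -1/2" "inner (a 2) (?b 0) = 0" "inner (a 3) (?b 0) = 0" "inner (a 4) (?b 0) = 0"
    using n0 by (simp_all add: inner_commute)
  have cb: "\<And>i j. i \<in> {1..4} \<Longrightarrow> j \<in> {1..4} \<Longrightarrow> cartan_hat ?b i j = 2 * Hgram 4 g i j"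
    by (auto simp add: cartan_hat_def Hgram_def)
  have c0_0: "cartan_hat ?b 0 0 = ev g (2,0)"
  proof -
    have "cartan_hat ?b 0 0 = 2 * (1 + g) / (1 + g)" by (simp add: cartan_hat_def n0 n0[unfolded One_nat_def] n00)
    also have "\<dots> = ev g (2,0)" using nz by (simp add: ev_def of_rat_divide of_rat_minus field_simps; (simp add: gg gk algebra_simps)?)
    finally show ?thesis .
  qed
  have c0_1: "cartan_hat ?b 0 1 = ev g (-2,1)"
  proof -
    have "cartan_hat ?b 0 1 = 2 * (-1/2) / (1 + g)" by (simp add: cartan_hat_def n0 n0[unfolded One_nat_def] n00)
    also have "\<dots> = ev g (-2,1)" using nz by (simp add: ev_def of_rat_divide of_rat_minus field_simps; (simp add: gg gk algebra_simps)?)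
    finally show ?thesis .
  qed
  have c0_2: "cartan_hat ?b 0 2 = ev g (0,0)"
  proof -
    have "cartan_hat ?b 0 2 = 2 * (0) / (1 + g)" by (simp add: cartan_hat_def n0 n0[unfolded One_nat_def] n00)
    also have "\<dots> = ev g (0,0)" using nz by (simp add: ev_def of_rat_divide of_rat_minus field_simps; (simp add: gg gk algebra_simps)?)
    finally show ?thesis .
  qed
  have c0_3: "cartan_hat ?b 0 3 = ev g (0,0)"
  proof -
    have "cartan_hat ?b 0 3 = 2 * (0) / (1 + g)" by (simp add: cartan_hat_def n0 n0[unfolded One_nat_def] n00)
    also have "\<dots> = ev g (0,0)" using nz by (simp add: ev_def of_rat_divide of_rat_minus field_simps; (simp add: gg gk algebra_simps)?)
    finally show ?thesis .
  qed
  have c0_4: "cartan_hat ?b 0 4 = ev g (0,0)"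
  proof -
    have "cartan_hat ?b 0 4 = 2 * (0) / (1 + g)" by (simp add: cartan_hat_def n0 n0[unfolded One_nat_def] n00)
    also have "\<dots> = ev g (0,0)" using nz by (simp add: ev_def of_rat_divide of_rat_minus field_simps; (simp add: gg gk algebra_simps)?)
    finally show ?thesis .
  qed
  note c0 = c0_0 c0_1 c0_2 c0_3 c0_4
  have c1: "cartan_hat ?b 1 0 = ev g (-1,0)" "cartan_hat ?b 2 0 = ev g (0,0)" "cartan_hat ?b 3 0 = ev g (0,0)" "cartan_hat ?b 4 0 = ev g (0,0)"
    using n0' by (simp_all add: cartan_hat_def Hgram_def ev_def)
  show ?thesis using le4[OF ij(1)] le4[OF ij(2)]
    by (elim disjE; simp add: c0 c1 c0[unfolded One_nat_def] c1[unfolded One_nat_def] cb ev_def Hgram_def doubleton_eq_iff)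
qed

lemma D6eq_cartan:
  fixes a :: "nat \<Rightarrow> 'v::real_inner"
  assumes g2: "g^2 = g + 1" and G: "\<forall>i\<in>{1..3}. \<forall>j\<in>{1..3}. inner (a i) (a j) = Hgram 3 g i j"
    and ij: "i \<le> 3" "j \<le> 3"
  shows "cartan_hat (ext_roots D6_eq g a) i j = ev g (Ct D6_eq ! i ! j)"
proof -
  have Gs[simp]: "\<And>i j. i\<in>{1..3} \<Longrightarrow> j\<in>{1..3} \<Longrightarrow> inner (a i) (a j) = Hgram 3 g i j" using G by blast
  have gg: "g*g = g+1" using g2 by (simp add: power2_eq_square)
  have gk: "\<And>k. g*(g*k) = k + g*k" by (simp only: mult.assoc[symmetric] gg) (simp add: algebra_simps)
  let ?b = "ext_roots D6_eq g a"
  have b0: "?b 0 = ((-1) + (-1) * g) *\<^sub>R a 1 + ((-2) + (-2) * g) *\<^sub>R a 2 + ((-1) + (-2) * g) *\<^sub>R a 3"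
    using D6eq_proj by (simp add: ext_roots_def)
  have bi[simp]: "\<And>i. i \<noteq> 0 \<Longrightarrow> ?b i = a i" by (simp add: ext_roots_def)
  have n00: "inner (?b 0) (?b 0) = 1 + g"
    unfolding b0 by (simp add: inner_add_left inner_add_right Hgram_def doubleton_eq_iff; ((simp add: field_simps)?); (simp add: gg gk algebra_simps)?)
  have nz: "1 + g \<noteq> 0"
  proof
    assume "1 + g = 0" hence "g = - (1 + g - g)" by simp
    with g2 show False by simp
  qed
  have n0_1: "inner (?b 0) (a 1) = 0"
    unfolding b0 by (simp add: inner_add_left inner_add_right Hgram_def doubleton_eq_iff; ((simp add: field_simps)?); (simp add: gg gk algebra_simps)?)
  have n0_2: "inner (?b 0) (a 2) = -1/2"
    unfolding b0 by (simp add: inner_add_left inner_add_right Hgram_def doubleton_eq_iff; ((simp add: field_simps)?); (simp add: gg gk algebra_simps)?)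
  have n0_3: "inner (?b 0) (a 3) = 0"
    unfolding b0 by (simp add: inner_add_left inner_add_right Hgram_def doubleton_eq_iff; ((simp add: field_simps)?); (simp add: gg gk algebra_simps)?)
  note n0 = n0_1 n0_2 n0_3
  have n0': "inner (a 1) (?b 0) = 0" "inner (a 2) (?b 0) = -1/2" "inner (a 3) (?b 0) = 0"
    using n0 by (simp_all add: inner_commute)
  have cb: "\<And>i j. i \<in> {1..3} \<Longrightarrow> j \<in> {1..3} \<Longrightarrow> cartan_hat ?b i j = 2 * Hgram 3 g i j"
    by (auto simp add: cartan_hat_def Hgram_def)
  have c0_0: "cartan_hat ?b 0 0 = ev g (2,0)"
  proof -
    have "cartan_hat ?b 0 0 = 2 * (1 + g) / (1 + g)" by (simp add: cartan_hat_def n0 n0[unfolded One_nat_def] n00)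
    also have "\<dots> = ev g (2,0)" using nz by (simp add: ev_def of_rat_divide of_rat_minus field_simps; (simp add: gg gk algebra_simps)?)
    finally show ?thesis .
  qed
  have c0_1: "cartan_hat ?b 0 1 = ev g (0,0)"
  proof -
    have "cartan_hat ?b 0 1 = 2 * (0) / (1 + g)" by (simp add: cartan_hat_def n0 n0[unfolded One_nat_def] n00)
    also have "\<dots> = ev g (0,0)" using nz by (simp add: ev_def of_rat_divide of_rat_minus field_simps; (simp add: gg gk algebra_simps)?)
    finally show ?thesis .
  qed
  have c0_2: "cartan_hat ?b 0 2 = ev g (-2,1)"
  proof -
    have "cartan_hat ?b 0 2 = 2 * (-1/2) / (1 + g)" by (simp add: cartan_hat_def n0 n0[unfolded One_nat_def] n00)
    also have "\<dots> = ev g (-2,1)" using nz by (simp add: ev_def of_rat_divide of_rat_minus field_simps; (simp add: gg gk algebra_simps)?)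
    finally show ?thesis .
  qed
  have c0_3: "cartan_hat ?b 0 3 = ev g (0,0)"
  proof -
    have "cartan_hat ?b 0 3 = 2 * (0) / (1 + g)" by (simp add: cartan_hat_def n0 n0[unfolded One_nat_def] n00)
    also have "\<dots> = ev g (0,0)" using nz by (simp add: ev_def of_rat_divide of_rat_minus field_simps; (simp add: gg gk algebra_simps)?)
    finally show ?thesis .
  qed
  note c0 = c0_0 c0_1 c0_2 c0_3
  have c1: "cartan_hat ?b 1 0 = ev g (0,0)" "cartan_hat ?b 2 0 = ev g (-1,0)" "cartan_hat ?b 3 0 = ev g (0,0)"
    using n0' by (simp_all add: cartan_hat_def Hgram_def ev_def)
  show ?thesis using le3[OF ij(1)] le3[OF ij(2)]
    by (elim disjE; simp add: c0 c1 c0[unfolded One_nat_def] c1[unfolded One_nat_def] cb ev_def Hgram_def doubleton_eq_iff)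
qed

lemma D6lt_cartan:
  fixes a :: "nat \<Rightarrow> 'v::real_inner"
  assumes g2: "g^2 = g + 1" and G: "\<forall>i\<in>{1..3}. \<forall>j\<in>{1..3}. inner (a i) (a j) = Hgram 3 g i j"
    and ij: "i \<le> 3" "j \<le> 3"
  shows "cartan_hat (ext_roots D6_lt g a) i j = ev g (Ct D6_lt ! i ! j)"
proof -
  have Gs[simp]: "\<And>i j. i\<in>{1..3} \<Longrightarrow> j\<in>{1..3} \<Longrightarrow> inner (a i) (a j) = Hgram 3 g i j" using G by blast
  have gg: "g*g = g+1" using g2 by (simp add: power2_eq_square)
  have gk: "\<And>k. g*(g*k) = k + g*k" by (simp only: mult.assoc[symmetric] gg) (simp add: algebra_simps)
  let ?b = "ext_roots D6_lt g a"
  have b0: "?b 0 = ((-1) + (-1/2) * g) *\<^sub>R a 1 + ((-1) + (-1) * g) *\<^sub>R a 2 + ((-1/2) + (-1) * g) *\<^sub>R a 3"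
    using D6lt_proj by (simp add: ext_roots_def)
  have bi[simp]: "\<And>i. i \<noteq> 0 \<Longrightarrow> ?b i = a i" by (simp add: ext_roots_def)
  have n00: "inner (?b 0) (?b 0) = (2 + g) / 4"
    unfolding b0 by (simp add: inner_add_left inner_add_right Hgram_def doubleton_eq_iff; ((simp add: field_simps)?); (simp add: gg gk algebra_simps)?)
  have nz: "2 + g \<noteq> 0"
  proof
    assume "2 + g = 0" hence "g = - (2 + g - g)" by simp
    with g2 show False by simp
  qed
  have n0_1: "inner (?b 0) (a 1) = -1/2"
    unfolding b0 by (simp add: inner_add_left inner_add_right Hgram_def doubleton_eq_iff; ((simp add: field_simps)?); (simp add: gg gk algebra_simps)?)
  have n0_2: "inner (?b 0) (a 2) = 0"
    unfolding b0 by (simp add: inner_add_left inner_add_right Hgram_def doubleton_eq_iff; ((simp add: field_simps)?); (simp add: gg gk algebra_simps)?)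
  have n0_3: "inner (?b 0) (a 3) = 0"
    unfolding b0 by (simp add: inner_add_left inner_add_right Hgram_def doubleton_eq_iff; ((simp add: field_simps)?); (simp add: gg gk algebra_simps)?)
  note n0 = n0_1 n0_2 n0_3
  have n0': "inner (a 1) (?b 0) = -1/2" "inner (a 2) (?b 0) = 0" "inner (a 3) (?b 0) = 0"
    using n0 by (simp_all add: inner_commute)
  have cb: "\<And>i j. i \<in> {1..3} \<Longrightarrow> j \<in> {1..3} \<Longrightarrow> cartan_hat ?b i j = 2 * Hgram 3 g i j"
    by (auto simp add: cartan_hat_def Hgram_def)
  have c0_0: "cartan_hat ?b 0 0 = ev g (2,0)"
  proof -
    have "cartan_hat ?b 0 0 = 2 * ((2 + g) / 4) / ((2 + g) / 4)" by (simp add: cartan_hat_def n0 n0[unfolded One_nat_def] n00)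
    also have "\<dots> = ev g (2,0)" using nz by (simp add: ev_def of_rat_divide of_rat_minus field_simps; (simp add: gg gk algebra_simps)?)
    finally show ?thesis .
  qed
  have c0_1: "cartan_hat ?b 0 1 = ev g (-12/5,4/5)"
  proof -
    have "cartan_hat ?b 0 1 = 2 * (-1/2) / ((2 + g) / 4)" by (simp add: cartan_hat_def n0 n0[unfolded One_nat_def] n00)
    also have "\<dots> = ev g (-12/5,4/5)" using nz by (simp add: ev_def of_rat_divide of_rat_minus field_simps; (simp add: gg gk algebra_simps)?)
    finally show ?thesis .
  qed
  have c0_2: "cartan_hat ?b 0 2 = ev g (0,0)"
  proof -
    have "cartan_hat ?b 0 2 = 2 * (0) / ((2 + g) / 4)" by (simp add: cartan_hat_def n0 n0[unfolded One_nat_def] n00)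
    also have "\<dots> = ev g (0,0)" using nz by (simp add: ev_def of_rat_divide of_rat_minus field_simps; (simp add: gg gk algebra_simps)?)
    finally show ?thesis .
  qed
  have c0_3: "cartan_hat ?b 0 3 = ev g (0,0)"
  proof -
    have "cartan_hat ?b 0 3 = 2 * (0) / ((2 + g) / 4)" by (simp add: cartan_hat_def n0 n0[unfolded One_nat_def] n00)
    also have "\<dots> = ev g (0,0)" using nz by (simp add: ev_def of_rat_divide of_rat_minus field_simps; (simp add: gg gk algebra_simps)?)
    finally show ?thesis .
  qed
  note c0 = c0_0 c0_1 c0_2 c0_3
  have c1: "cartan_hat ?b 1 0 = ev g (-1,0)" "cartan_hat ?b 2 0 = ev g (0,0)" "cartan_hat ?b 3 0 = ev g (0,0)"
    using n0' by (simp_all add: cartan_hat_def Hgram_def ev_def)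
  show ?thesis using le3[OF ij(1)] le3[OF ij(2)]
    by (elim disjE; simp add: c0 c1 c0[unfolded One_nat_def] c1[unfolded One_nat_def] cb ev_def Hgram_def doubleton_eq_iff)
qed

lemma D6gt_cartan:
  fixes a :: "nat \<Rightarrow> 'v::real_inner"
  assumes g2: "g^2 = g + 1" and G: "\<forall>i\<in>{1..3}. \<forall>j\<in>{1..3}. inner (a i) (a j) = Hgram 3 g i j"
    and ij: "i \<le> 3" "j \<le> 3"
  shows "cartan_hat (ext_roots D6_gt g a) i j = ev g (Ct D6_gt ! i ! j)"
proof -
  have Gs[simp]: "\<And>i j. i\<in>{1..3} \<Longrightarrow> j\<in>{1..3} \<Longrightarrow> inner (a i) (a j) = Hgram 3 g i j" using G by blast
  have gg: "g*g = g+1" using g2 by (simp add: power2_eq_square)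
  have gk: "\<And>k. g*(g*k) = k + g*k" by (simp only: mult.assoc[symmetric] gg) (simp add: algebra_simps)
  let ?b = "ext_roots D6_gt g a"
  have b0: "?b 0 = ((-2) + (-1) * g) *\<^sub>R a 1 + ((-2) + (-2) * g) *\<^sub>R a 2 + ((-1) + (-2) * g) *\<^sub>R a 3"
    using D6gt_proj by (simp add: ext_roots_def)
  have bi[simp]: "\<And>i. i \<noteq> 0 \<Longrightarrow> ?b i = a i" by (simp add: ext_roots_def)
  have n00: "inner (?b 0) (?b 0) = 2 + g"
    unfolding b0 by (simp add: inner_add_left inner_add_right Hgram_def doubleton_eq_iff; ((simp add: field_simps)?); (simp add: gg gk algebra_simps)?)
  have nz: "2 + g \<noteq> 0"
  proof
    assume "2 + g = 0" hence "g = - (2 + g - g)" by simp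
    with g2 show False by simp
  qed
  have n0_1: "inner (?b 0) (a 1) = -1"
    unfolding b0 by (simp add: inner_add_left inner_add_right Hgram_def doubleton_eq_iff; ((simp add: field_simps)?); (simp add: gg gk algebra_simps)?)
  have n0_2: "inner (?b 0) (a 2) = 0"
    unfolding b0 by (simp add: inner_add_left inner_add_right Hgram_def doubleton_eq_iff; ((simp add: field_simps)?); (simp add: gg gk algebra_simps)?)
  have n0_3: "inner (?b 0) (a 3) = 0"
    unfolding b0 by (simp add: inner_add_left inner_add_right Hgram_def doubleton_eq_iff; ((simp add: field_simps)?); (simp add: gg gk algebra_simps)?)
  note n0 = n0_1 n0_2 n0_3
  have n0': "inner (a 1) (?b 0) = -1" "inner (a 2) (?b 0) = 0" "inner (a 3) (?b 0) = 0"
    using n0 by (simp_all add: inner_commute)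
  have cb: "\<And>i j. i \<in> {1..3} \<Longrightarrow> j \<in> {1..3} \<Longrightarrow> cartan_hat ?b i j = 2 * Hgram 3 g i j"
    by (auto simp add: cartan_hat_def Hgram_def)
  have c0_0: "cartan_hat ?b 0 0 = ev g (2,0)"
  proof -
    have "cartan_hat ?b 0 0 = 2 * (2 + g) / (2 + g)" by (simp add: cartan_hat_def n0 n0[unfolded One_nat_def] n00)
    also have "\<dots> = ev g (2,0)" using nz by (simp add: ev_def of_rat_divide of_rat_minus field_simps; (simp add: gg gk algebra_simps)?)
    finally show ?thesis .
  qed
  have c0_1: "cartan_hat ?b 0 1 = ev g (-6/5,2/5)"
  proof -
    have "cartan_hat ?b 0 1 = 2 * (-1) / (2 + g)" by (simp add: cartan_hat_def n0 n0[unfolded One_nat_def] n00)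
    also have "\<dots> = ev g (-6/5,2/5)" using nz by (simp add: ev_def of_rat_divide of_rat_minus field_simps; (simp add: gg gk algebra_simps)?)
    finally show ?thesis .
  qed
  have c0_2: "cartan_hat ?b 0 2 = ev g (0,0)"
  proof -
    have "cartan_hat ?b 0 2 = 2 * (0) / (2 + g)" by (simp add: cartan_hat_def n0 n0[unfolded One_nat_def] n00)
    also have "\<dots> = ev g (0,0)" using nz by (simp add: ev_def of_rat_divide of_rat_minus field_simps; (simp add: gg gk algebra_simps)?)
    finally show ?thesis .
  qed
  have c0_3: "cartan_hat ?b 0 3 = ev g (0,0)"
  proof -
    have "cartan_hat ?b 0 3 = 2 * (0) / (2 + g)" by (simp add: cartan_hat_def n0 n0[unfolded One_nat_def] n00)
    also have "\<dots> = ev g (0,0)" using nz by (simp add: ev_def of_rat_divide of_rat_minus field_simps; (simp add: gg gk algebra_simps)?)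
    finally show ?thesis .
  qed
  note c0 = c0_0 c0_1 c0_2 c0_3
  have c1: "cartan_hat ?b 1 0 = ev g (-2,0)" "cartan_hat ?b 2 0 = ev g (0,0)" "cartan_hat ?b 3 0 = ev g (0,0)"
    using n0' by (simp_all add: cartan_hat_def Hgram_def ev_def)
  show ?thesis using le3[OF ij(1)] le3[OF ij(2)]
    by (elim disjE; simp add: c0 c1 c0[unfolded One_nat_def] c1[unfolded One_nat_def] cb ev_def Hgram_def doubleton_eq_iff)
qed

lemma A4_cartan:
  fixes a :: "nat \<Rightarrow> 'v::real_inner"
  assumes g2: "g^2 = g + 1" and G: "\<forall>i\<in>{1..2}. \<forall>j\<in>{1..2}. inner (a i) (a j) = Hgram 2 g i j"
    and ij: "i \<le> 2" "j \<le> 2"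
  shows "cartan_hat (ext_roots A4_eq g a) i j = ev g (Ct A4_eq ! i ! j)"
proof -
  have Gs[simp]: "\<And>i j. i\<in>{1..2} \<Longrightarrow> j\<in>{1..2} \<Longrightarrow> inner (a i) (a j) = Hgram 2 g i j" using G by blast
  have gg: "g*g = g+1" using g2 by (simp add: power2_eq_square)
  have gk: "\<And>k. g*(g*k) = k + g*k" by (simp only: mult.assoc[symmetric] gg) (simp add: algebra_simps)
  let ?b = "ext_roots A4_eq g a"
  have b0: "?b 0 = ((-1) + (-1) * g) *\<^sub>R a 1 + ((-1) + (-1) * g) *\<^sub>R a 2"
    using A4_proj by (simp add: ext_roots_def)
  have bi[simp]: "\<And>i. i \<noteq> 0 \<Longrightarrow> ?b i = a i" by (simp add: ext_roots_def)
  have n00: "inner (?b 0) (?b 0) = 1 + g"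
    unfolding b0 by (simp add: inner_add_left inner_add_right Hgram_def doubleton_eq_iff; ((simp add: field_simps)?); (simp add: gg gk algebra_simps)?)
  have nz: "1 + g \<noteq> 0"
  proof
    assume "1 + g = 0" hence "g = - (1 + g - g)" by simp
    with g2 show False by simp
  qed
  have n0_1: "inner (?b 0) (a 1) = -1/2"
    unfolding b0 by (simp add: inner_add_left inner_add_right Hgram_def doubleton_eq_iff; ((simp add: field_simps)?); (simp add: gg gk algebra_simps)?)
  have n0_2: "inner (?b 0) (a 2) = -1/2"
    unfolding b0 by (simp add: inner_add_left inner_add_right Hgram_def doubleton_eq_iff; ((simp add: field_simps)?); (simp add: gg gk algebra_simps)?)
  note n0 = n0_1 n0_2
  have n0': "inner (a 1) (?b 0) = -1/2" "inner (a 2) (?b 0) = -1/2"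
    using n0 by (simp_all add: inner_commute)
  have cb: "\<And>i j. i \<in> {1..2} \<Longrightarrow> j \<in> {1..2} \<Longrightarrow> cartan_hat ?b i j = 2 * Hgram 2 g i j"
    by (auto simp add: cartan_hat_def Hgram_def)
  have c0_0: "cartan_hat ?b 0 0 = ev g (2,0)"
  proof -
    have "cartan_hat ?b 0 0 = 2 * (1 + g) / (1 + g)" by (simp add: cartan_hat_def n0 n0[unfolded One_nat_def] n00)
    also have "\<dots> = ev g (2,0)" using nz by (simp add: ev_def of_rat_divide of_rat_minus field_simps; (simp add: gg gk algebra_simps)?)
    finally show ?thesis .
  qed
  have c0_1: "cartan_hat ?b 0 1 = ev g (-2,1)"
  proof -
    have "cartan_hat ?b 0 1 = 2 * (-1/2) / (1 + g)" by (simp add: cartan_hat_def n0 n0[unfolded One_nat_def] n00)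
    also have "\<dots> = ev g (-2,1)" using nz by (simp add: ev_def of_rat_divide of_rat_minus field_simps; (simp add: gg gk algebra_simps)?)
    finally show ?thesis .
  qed
  have c0_2: "cartan_hat ?b 0 2 = ev g (-2,1)"
  proof -
    have "cartan_hat ?b 0 2 = 2 * (-1/2) / (1 + g)" by (simp add: cartan_hat_def n0 n0[unfolded One_nat_def] n00)
    also have "\<dots> = ev g (-2,1)" using nz by (simp add: ev_def of_rat_divide of_rat_minus field_simps; (simp add: gg gk algebra_simps)?)
    finally show ?thesis .
  qed
  note c0 = c0_0 c0_1 c0_2
  have c1: "cartan_hat ?b 1 0 = ev g (-1,0)" "cartan_hat ?b 2 0 = ev g (-1,0)"
    using n0' by (simp_all add: cartan_hat_def Hgram_def ev_def)
  show ?thesis using le2[OF ij(1)] le2[OF ij(2)]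
    by (elim disjE; simp add: c0 c1 c0[unfolded One_nat_def] c1[unfolded One_nat_def] cb ev_def Hgram_def doubleton_eq_iff)
qed

lemma det_upto_col_dep:
  fixes M :: "nat \<Rightarrow> nat \<Rightarrow> real"
  assumes col: "\<And>i. i \<le> m \<Longrightarrow> M i 0 = (\<Sum>k=1..m. x k * M i k)"
  shows "det_upto m M = 0"
proof -
  define A where "A = Matrix.mat (Suc m) (Suc m) (\<lambda>(i,j). M i j)"
  have A: "A \<in> carrier_mat (Suc m) (Suc m)" by (simp add: A_def)
  have set: "{0..<Suc m} = {0..m}" by auto
  have eq: "det_upto m M = Determinant.det A"
    unfolding det_upto_def Determinant.det_def'[OF A] set
  proof (rule sum.cong[OF refl])
    fix p assume "p \<in> {p. p permutes {0..m}}"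
    hence p: "p permutes {0..m}" by simp
    have "(\<Prod>i\<in>{0..m}. M i (p i)) = (\<Prod>i\<in>{0..m}. A $$ (i, p i))"
    proof (rule prod.cong[OF refl])
      fix i assume i: "i \<in> {0..m}"
      hence "p i \<in> {0..m}" using permutes_in_image[OF p] by simp
      thus "M i (p i) = A $$ (i, p i)" using i by (simp add: A_def)
    qed
    thus "of_int (sign p) * (\<Prod>i\<in>{0..m}. M i (p i)) = of_int (sign p) * (\<Prod>i\<in>{0..m}. A $$ (i, p i))"
      by simp
  qed
  define v where "v = Matrix.vec (Suc m) (\<lambda>k. if k = 0 then -1 else x k)"
  have v: "v \<in> carrier_vec (Suc m)" by (simp add: v_def)
  have vnz: "v \<noteq> 0\<^sub>v (Suc m)"
  proof
    assume "v = 0\<^sub>v (Suc m)"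
    hence "v $ 0 = 0\<^sub>v (Suc m) $ 0" by simp
    thus False by (simp add: v_def)
  qed
  have Av: "A *\<^sub>v v = 0\<^sub>v (Suc m)"
  proof (rule eq_vecI)
    show "dim_vec (A *\<^sub>v v) = dim_vec (0\<^sub>v (Suc m))" by (simp add: A_def)
    fix i assume "i < dim_vec (0\<^sub>v (Suc m))"
    hence i: "i < Suc m" by simp
    have "(A *\<^sub>v v) $ i = (\<Sum>k\<in>{0..<Suc m}. A $$ (i,k) * v $ k)"
      using i by (simp add: A_def scalar_prod_def v_def)
    also have "\<dots> = (\<Sum>k\<in>{0..<Suc m}. M i k * (if k = 0 then -1 else x k))"
      using i by (intro sum.cong) (auto simp: A_def v_def)
    also have "\<dots> = - M i 0 + (\<Sum>k\<in>{1..m}. M i k * x k)"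
    proof -
      have "{0..<Suc m} = insert 0 {1..m}" by auto
      thus ?thesis by (simp add: sum.insert)
    qed
    also have "\<dots> = 0" using col[of i] i by (simp add: mult.commute)
    finally show "(A *\<^sub>v v) $ i = 0\<^sub>v (Suc m) $ i" using i by simp
  qed
  have "Determinant.det A = 0"
    using det_0_iff_vec_prod_zero[OF A] v vnz Av by blast
  thus ?thesis using eq by simp
qed

lemma det_cartan_zero:
  fixes b :: "nat \<Rightarrow> 'v::real_inner"
  assumes "b 0 = (\<Sum>k=1..m. x k *\<^sub>R b k)"
  shows "det_upto m (cartan_hat b) = 0"
proof (rule det_upto_col_dep)
  fix i assume "i \<le> m"
  show "cartan_hat b i 0 = (\<Sum>k=1..m. x k * cartan_hat b i k)"
  proof -
    have "cartan_hat b i 0 = 2 * inner (b i) (\<Sum>k=1..m. x k *\<^sub>R b k) / inner (b i) (b i)"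
      unfolding cartan_hat_def assms ..
    also have "\<dots> = 2 * (\<Sum>k=1..m. x k * inner (b i) (b k)) / inner (b i) (b i)"
      by (simp only: inner_sum_right inner_scaleR_right)
    also have "\<dots> = (\<Sum>k=1..m. x k * (2 * inner (b i) (b k) / inner (b i) (b i)))"
      by (simp only: sum_distrib_left sum_divide_distrib) (simp add: algebra_simps)
    finally show ?thesis unfolding cartan_hat_def .
  qed
qed

lemma sqrt5_irrat: "sqrt 5 \<notin> \<rat>"
proof
  assume "sqrt 5 \<in> \<rat>"
  then obtain m n :: nat where n: "n \<noteq> 0" and sq: "\<bar>sqrt 5\<bar> = m / n" and cop: "coprime m n"
    by (rule Rats_abs_nat_div_natE)
  have p: "prime (5::nat)" by simp
  have "real m = \<bar>sqrt 5\<bar> * n" using n sq by simp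
  hence "real (m^2) = (sqrt 5)^2 * real (n^2)" by (simp add: power_mult_distrib)
  hence "real (m^2) = real (5 * n^2)" by simp
  hence eq: "m^2 = 5 * n^2" by (simp only: of_nat_eq_iff)
  have "5 dvd m"
  proof -
    from eq have "5 dvd m^2" by simp
    with p show ?thesis by (rule prime_dvd_power)
  qed
  then obtain k where k: "m = 5 * k" ..
  with eq have "5 * n^2 = 5^2 * k^2" by (simp add: power_mult_distrib)
  hence "n^2 = 5 * k^2" by (simp add: power2_eq_square)
  hence "5 dvd n^2" by simp
  with p have "5 dvd n" by (rule prime_dvd_power)
  with \<open>5 dvd m\<close> have "5 dvd gcd m n" by simp
  with cop show False by simp
qed

lemma tau_indep:
  assumes "of_rat p + of_rat q * tau = of_rat p' + of_rat q' * tau"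
  shows "p = p' \<and> q = q'"
proof (cases "q = q'")
  case True
  thus ?thesis using assms by simp
next
  case False
  hence "tau = of_rat ((p - p') / (q' - q))" using assms
    by (simp add: of_rat_divide of_rat_diff field_simps)
  hence "tau \<in> \<rat>" by (metis Rats_of_rat)
  hence "2 * tau - 1 \<in> \<rat>" by simp
  moreover have "2 * tau - 1 = sqrt 5" by (simp add: tau_def field_simps)
  ultimately show ?thesis using sqrt5_irrat by simp
qed

lemma ev_tau_zero: "ev tau pq = 0 \<longleftrightarrow> pq = (0,0)"
  using tau_indep[of "fst pq" "snd pq" 0 0] by (cases pq) (auto simp: ev_def)

lemma galois_ev: "galois (ev tau pq) = ev sigma pq"
  unfolding galois_def
proof (rule the_equality)
  show "\<exists>p q. ev tau pq = of_rat p + of_rat q * tau \<and> ev sigma pq = of_rat p + of_rat q * sigma"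
    by (auto simp: ev_def)
next
  fix y assume "\<exists>p q. ev tau pq = of_rat p + of_rat q * tau \<and> y = of_rat p + of_rat q * sigma"
  then obtain p q where h: "ev tau pq = of_rat p + of_rat q * tau" "y = of_rat p + of_rat q * sigma" by blast
  from h(1) have "fst pq = p \<and> snd pq = q" unfolding ev_def by (rule tau_indep)
  thus "y = ev sigma pq" using h(2) by (simp add: ev_def)
qed

lemma tau_sq: "tau^2 = tau + 1"
  by (simp add: tau_def power2_eq_square field_simps)
lemma sigma_sq: "sigma^2 = sigma + 1"
  by (simp add: sigma_def power2_eq_square field_simps)
lemma tau_bounds: "1 < tau" "tau < 2"
proof -
  have a: "1 < sqrt 5" by simp
  have b: "sqrt 5 < 3" by (rule real_less_lsqrt) simp_all
  show "1 < tau" "tau < 2" using a b by (simp_all add: tau_def)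
qed

lemma proj_Xt: "proj c g a (alpha0 c) = (\<Sum>k=1..hrank c. ev g (Xt c ! (k-1)) *\<^sub>R a k)"
proof (cases c)
  case E8_eq
  have s: "{1..4::nat} = {1,2,3,4}" by auto
  show ?thesis unfolding E8_eq hrank.simps s E8_proj by (simp add: ev_def of_rat_divide of_rat_minus algebra_simps)
next
  case D6_eq
  have s: "{1..3::nat} = {1,2,3}" by auto
  show ?thesis unfolding D6_eq hrank.simps s D6eq_proj by (simp add: ev_def of_rat_divide of_rat_minus algebra_simps)
next
  case D6_lt
  have s: "{1..3::nat} = {1,2,3}" by auto
  show ?thesis unfolding D6_lt hrank.simps s D6lt_proj by (simp add: ev_def of_rat_divide of_rat_minus algebra_simps)
next
  case D6_gt
  have s: "{1..3::nat} = {1,2,3}" by auto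
  show ?thesis unfolding D6_gt hrank.simps s D6gt_proj by (simp add: ev_def of_rat_divide of_rat_minus algebra_simps)
next
  case A4_eq
  have s: "{1..2::nat} = {1,2}" by auto
  show ?thesis unfolding A4_eq hrank.simps s A4_proj by (simp add: ev_def of_rat_divide of_rat_minus algebra_simps)
qed

lemma cartan_all:
  fixes a :: "nat \<Rightarrow> 'v::real_inner"
  assumes "g^2 = g+1" "\<forall>i\<in>{1..hrank c}. \<forall>j\<in>{1..hrank c}. inner (a i) (a j) = Hgram (hrank c) g i j"
    "i \<le> hrank c" "j \<le> hrank c"
  shows "cartan_hat (ext_roots c g a) i j = ev g (Ct c ! i ! j)"
proof (cases c)
  case E8_eq thus ?thesis using assms E8_cartan[of g a i j] by simp
next
  case D6_eq thus ?thesis using assms D6eq_cartan[of g a i j] by simp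
next
  case D6_lt thus ?thesis using assms D6lt_cartan[of g a i j] by simp
next
  case D6_gt thus ?thesis using assms D6gt_cartan[of g a i j] by simp
next
  case A4_eq thus ?thesis using assms A4_cartan[of g a i j] by simp
qed

lemma Ct_diag: "i \<le> hrank c \<Longrightarrow> Ct c ! i ! i = (2,0)"
  by (cases c) (auto dest!: le4 le3 le2)

lemma Ct_nonpos: "i \<le> hrank c \<Longrightarrow> j \<le> hrank c \<Longrightarrow> i \<noteq> j \<Longrightarrow> ev tau (Ct c ! i ! j) \<le> 0"
  using tau_bounds by (cases c) (auto dest!: le4 le3 le2 simp: ev_def of_rat_divide of_rat_minus)

lemma Ct_int: "c \<in> {E8_eq, D6_eq, A4_eq} \<Longrightarrow> i \<le> hrank c \<Longrightarrow> j \<le> hrank c \<Longrightarrow>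
    fst (Ct c ! i ! j) \<in> \<int> \<and> snd (Ct c ! i ! j) \<in> \<int>"
  by (cases c) (auto dest!: le4 le3 le2)

lemma Ct_zero: "i \<le> hrank c \<Longrightarrow> j \<le> hrank c \<Longrightarrow> Ct c ! i ! j = (0,0) \<longleftrightarrow> Ct c ! j ! i = (0,0)"
  by (cases c) (auto dest!: le4 le3 le2)

theorem mainTheorem1:
  fixes c :: affcase and a abar :: "nat \<Rightarrow> 'v::euclidean_space"
  assumes "DIM('v) = hrank c"
    and "\<forall>i\<in>{1..hrank c}. \<forall>j\<in>{1..hrank c}. inner (a i) (a j) = Hgram (hrank c) tau i j"
    and "\<forall>i\<in>{1..hrank c}. \<forall>j\<in>{1..hrank c}. inner (abar i) (abar j) = Hgram (hrank c) sigma i j"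
  shows "proj c tau a (alpha0 c) \<noteq> 0
    \<and> (\<forall>i\<le>hrank c. cartan_hat (ext_roots c tau a) i i = 2)
    \<and> (\<forall>i\<le>hrank c. \<forall>j\<le>hrank c. i \<noteq> j \<longrightarrow>
          cartan_hat (ext_roots c tau a) i j \<le> 0
        \<and> cartan_hat (ext_roots c tau a) i j \<in> Qtau
        \<and> (c \<in> {E8_eq, D6_eq, A4_eq} \<longrightarrow> cartan_hat (ext_roots c tau a) i j \<in> Ztau))
    \<and> (\<forall>i\<le>hrank c. \<forall>j\<le>hrank c.
          cartan_hat (ext_roots c tau a) i j = 0 \<longleftrightarrow> cartan_hat (ext_roots c tau a) j i = 0)
    \<and> det_upto (hrank c) (cartan_hat (ext_roots c tau a)) = 0
    \<and> (\<exists>x y. proj c tau a (alpha0 c) = (\<Sum>i = 1..hrank c. x i *\<^sub>R a i)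
           \<and> proj c sigma abar (alpha0 c) = (\<Sum>i = 1..hrank c. y i *\<^sub>R abar i)
           \<and> (\<forall>i\<in>{1..hrank c}. x i \<in> Qtau \<and> y i = galois (x i)))
    \<and> (\<forall>i\<le>hrank c. \<forall>j\<le>hrank c.
          cartan_hat (ext_roots c sigma abar) i j = galois (cartan_hat (ext_roots c tau a) i j))"
proof -
  let ?m = "hrank c"
  let ?b = "ext_roots c tau a"
  have CT: "\<And>i j. i \<le> ?m \<Longrightarrow> j \<le> ?m \<Longrightarrow> cartan_hat ?b i j = ev tau (Ct c ! i ! j)"
    using cartan_all[OF tau_sq assms(2)] by blast
  have CS: "\<And>i j. i \<le> ?m \<Longrightarrow> j \<le> ?m \<Longrightarrow> cartan_hat (ext_roots c sigma abar) i j = ev sigma (Ct c ! i ! j)"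
    using cartan_all[OF sigma_sq assms(3)] by blast
  have evQ: "\<And>pq. ev tau pq \<in> Qtau" unfolding Qtau_def ev_def by blast
  define x where "x k = ev tau (Xt c ! (k-1))" for k
  define y where "y k = ev sigma (Xt c ! (k-1))" for k
  have px: "proj c tau a (alpha0 c) = (\<Sum>k=1..?m. x k *\<^sub>R a k)"
    unfolding x_def by (rule proj_Xt)
  have py: "proj c sigma abar (alpha0 c) = (\<Sum>k=1..?m. y k *\<^sub>R abar k)"
    unfolding y_def by (rule proj_Xt)
  have P1: "proj c tau a (alpha0 c) \<noteq> 0"
  proof
    assume h: "proj c tau a (alpha0 c) = 0"
    have "cartan_hat ?b 0 0 = 0" using h by (simp add: cartan_hat_def ext_roots_def)
    moreover have "cartan_hat ?b 0 0 = 2" using CT[of 0 0] Ct_diag[of 0 c] by (simp add: ev_def)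
    ultimately show False by simp
  qed
  have P2: "\<forall>i\<le>?m. cartan_hat ?b i i = 2"
    using CT Ct_diag by (simp add: ev_def)
  have P3: "\<forall>i\<le>?m. \<forall>j\<le>?m. i \<noteq> j \<longrightarrow>
          cartan_hat ?b i j \<le> 0 \<and> cartan_hat ?b i j \<in> Qtau
        \<and> (c \<in> {E8_eq, D6_eq, A4_eq} \<longrightarrow> cartan_hat ?b i j \<in> Ztau)"
  proof (intro allI impI conjI)
    fix i j assume ij: "i \<le> ?m" "j \<le> ?m" "i \<noteq> j"
    show "cartan_hat ?b i j \<le> 0" using CT[OF ij(1,2)] Ct_nonpos[OF ij] by simp
    show "cartan_hat ?b i j \<in> Qtau" using CT[OF ij(1,2)] evQ by simp
    assume c: "c \<in> {E8_eq, D6_eq, A4_eq}"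
    from Ct_int[OF c ij(1,2)] obtain p q :: int where
      pq: "fst (Ct c ! i ! j) = of_int p" "snd (Ct c ! i ! j) = of_int q"
      by (auto elim!: Ints_cases)
    have "cartan_hat ?b i j = of_int p + of_int q * tau"
      using CT[OF ij(1,2)] pq by (simp add: ev_def)
    thus "cartan_hat ?b i j \<in> Ztau" unfolding Ztau_def by blast
  qed
  have P4: "\<forall>i\<le>?m. \<forall>j\<le>?m. cartan_hat ?b i j = 0 \<longleftrightarrow> cartan_hat ?b j i = 0"
    using CT Ct_zero ev_tau_zero by simp
  have P5: "det_upto ?m (cartan_hat ?b) = 0"
  proof (rule det_cartan_zero)
    have "?b 0 = (\<Sum>k=1..?m. x k *\<^sub>R a k)" using px by (simp add: ext_roots_def)
    also have "\<dots> = (\<Sum>k=1..?m. x k *\<^sub>R ?b k)"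
      by (rule sum.cong) (auto simp: ext_roots_def)
    finally show "?b 0 = (\<Sum>k=1..?m. x k *\<^sub>R ?b k)" .
  qed
  have P6: "\<exists>x y. proj c tau a (alpha0 c) = (\<Sum>i = 1..?m. x i *\<^sub>R a i)
           \<and> proj c sigma abar (alpha0 c) = (\<Sum>i = 1..?m. y i *\<^sub>R abar i)
           \<and> (\<forall>i\<in>{1..?m}. x i \<in> Qtau \<and> y i = galois (x i))"
  proof (intro exI conjI)
    show "proj c tau a (alpha0 c) = (\<Sum>i = 1..?m. x i *\<^sub>R a i)" by (rule px)
    show "proj c sigma abar (alpha0 c) = (\<Sum>i = 1..?m. y i *\<^sub>R abar i)" by (rule py)
    show "\<forall>i\<in>{1..?m}. x i \<in> Qtau \<and> y i = galois (x i)"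
      using evQ galois_ev by (simp add: x_def y_def)
  qed
  have P7: "\<forall>i\<le>?m. \<forall>j\<le>?m. cartan_hat (ext_roots c sigma abar) i j = galois (cartan_hat ?b i j)"
    using CT CS galois_ev by simp
  show ?thesis using P1 P2 P3 P4 P5 P6 P7 by blast
qed
end
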